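(* Let $\Gamma=(V,E)$ be a locally finite reflexive relation and $v\in V$. If $F_1$ and $F_2$ are $v$-fragments, then $F_1\cap F_2$ and $F_1\cup F_2$ are $v$-fragments. In particular, there exists a $v$-fragment contained in every $v$-fragment.
   Context: A relation is a pair $\Gamma=(V,E)$ with $E\subset V\times V$; for $X\subset V$, $\Gamma(X)=\{y: (x,y)\in E \text{ for some } x\in X\}$, $\Gamma^-(X)=\{y:(y,x)\in E\text{ for some }x\in X\}$, $\Gamma(x)=\Gamma(\{x\})$. $\Gamma$ is reflexive if $(x,x)\in E$ for all $x$, and locally finite if $\Gamma(x)$ and $\Gamma^-(x)$ are finite for all $x$. Write $\partial(X)=\Gamma(X)\setminus X$. A set $F\subset V$ is a $v$-Moser set if $\Gamma^-(v)\cap F=\{v\}$. Let $\kappa_\Gamma(v)=\min\{|\partial(X)|: X \text{ a } v\text{-Moser set}\}$. A $v$-fragment is a $v$-Moser set $X$ with $|\partial(X)|=\kappa_\Gamma(v)$. *)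

theory Defs
  imports Main
begin

definition out_nbhd :: "('a \<times> 'a) set \<Rightarrow> 'a set \<Rightarrow> 'a set" where
  "out_nbhd E X = {y. \<exists>x\<in>X. (x, y) \<in> E}"

definition in_nbhd :: "('a \<times> 'a) set \<Rightarrow> 'a set \<Rightarrow> 'a set" where
  "in_nbhd E X = {y. \<exists>x\<in>X. (y, x) \<in> E}"

definition reflexive_rel :: "'a set \<Rightarrow> ('a \<times> 'a) set \<Rightarrow> bool" where
  "reflexive_rel V E \<longleftrightarrow> (\<forall>x\<in>V. (x, x) \<in> E)"

definition locally_finite :: "'a set \<Rightarrow> ('a \<times> 'a) set \<Rightarrow> bool" where
  "locally_finite V E \<longleftrightarrow>
     (\<forall>x\<in>V. finite (out_nbhd E {x}) \<and> finite (in_nbhd E {x}))"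

definition bdry :: "('a \<times> 'a) set \<Rightarrow> 'a set \<Rightarrow> 'a set" where
  "bdry E X = out_nbhd E X - X"

definition moser_set :: "'a set \<Rightarrow> ('a \<times> 'a) set \<Rightarrow> 'a \<Rightarrow> 'a set \<Rightarrow> bool" where
  "moser_set V E v F \<longleftrightarrow> F \<subseteq> V \<and> in_nbhd E {v} \<inter> F = {v}"

text \<open>Since {v} is a
  v-Moser set with finite boundary (local finiteness), the minimum cardinality is
  attained by a set with finite boundary, so we minimise over those.\<close>
definition kappa :: "'a set \<Rightarrow> ('a \<times> 'a) set \<Rightarrow> 'a \<Rightarrow> nat" where
  "kappa V E v = (LEAST k. \<exists>X. moser_set V E v X \<and> finite (bdry E X) \<and> card (bdry E X) = k)"

definition fragment :: "'a set \<Rightarrow> ('a \<times> 'a) set \<Rightarrow> 'a \<Rightarrow> 'a set \<Rightarrow> bool" where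
  "fragment V E v X \<longleftrightarrow> moser_set V E v X \<and> finite (bdry E X) \<and> card (bdry E X) = kappa V E v"

end

theory Submission
  imports Defs
begin

lemma bdry_sub:
  assumes fX: "finite (bdry E X)" and fY: "finite (bdry E Y)"
  shows "finite (bdry E (X \<inter> Y)) \<and> finite (bdry E (X \<union> Y)) \<and>
         card (bdry E (X \<inter> Y)) + card (bdry E (X \<union> Y)) \<le> card (bdry E X) + card (bdry E Y)"
proof -
  let ?A = "bdry E (X \<inter> Y)" and ?B = "bdry E (X \<union> Y)"
  have U: "?A \<union> ?B \<subseteq> bdry E X \<union> bdry E Y"
    unfolding bdry_def out_nbhd_def by blast
  have I: "?A \<inter> ?B \<subseteq> bdry E X \<inter> bdry E Y"
    unfolding bdry_def out_nbhd_def by blast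
  have fA: "finite ?A" using U fX fY by (meson finite_UnI finite_subset le_sup_iff)
  have fB: "finite ?B" using U fX fY by (meson finite_UnI finite_subset le_sup_iff)
  have "card ?A + card ?B = card (?A \<union> ?B) + card (?A \<inter> ?B)"
    using card_Un_Int[OF fA fB] .
  also have "\<dots> \<le> card (bdry E X \<union> bdry E Y) + card (bdry E X \<inter> bdry E Y)"
    using U I fX fY by (intro add_mono card_mono) auto
  also have "\<dots> = card (bdry E X) + card (bdry E Y)"
    using card_Un_Int[OF fX fY] by simp
  finally show ?thesis using fA fB by simp
qed

lemma kappa_le:
  assumes "moser_set V E v X" "finite (bdry E X)"
  shows "kappa V E v \<le> card (bdry E X)"
  unfolding kappa_def by (rule Least_le) (use assms in blast)

lemma frag_closed:
  assumes "fragment V E v X" "fragment V E v Y"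
  shows "fragment V E v (X \<inter> Y) \<and> fragment V E v (X \<union> Y)"
proof -
  have mX: "X \<subseteq> V" "in_nbhd E {v} \<inter> X = {v}" and mY: "Y \<subseteq> V" "in_nbhd E {v} \<inter> Y = {v}"
    using assms unfolding fragment_def moser_set_def by auto
  have "X \<inter> Y \<subseteq> V" "in_nbhd E {v} \<inter> (X \<inter> Y) = {v}"
    using mX mY by auto
  then have mI: "moser_set V E v (X \<inter> Y)" unfolding moser_set_def by simp
  have "X \<union> Y \<subseteq> V" "in_nbhd E {v} \<inter> (X \<union> Y) = {v}"
    using mX mY by auto
  then have mU: "moser_set V E v (X \<union> Y)" unfolding moser_set_def by simp
  from assms have fX: "finite (bdry E X)" "card (bdry E X) = kappa V E v"
    and fY: "finite (bdry E Y)" "card (bdry E Y) = kappa V E v"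
    unfolding fragment_def by auto
  note s = bdry_sub[OF fX(1) fY(1)]
  have k1: "kappa V E v \<le> card (bdry E (X \<inter> Y))" using kappa_le[OF mI] s by simp
  have k2: "kappa V E v \<le> card (bdry E (X \<union> Y))" using kappa_le[OF mU] s by simp
  have "card (bdry E (X \<inter> Y)) = kappa V E v" "card (bdry E (X \<union> Y)) = kappa V E v"
    using k1 k2 s fX(2) fY(2) by linarith+
  then show ?thesis using s mI mU unfolding fragment_def by simp
qed

lemma frag_fin_inter:
  assumes "finite S" "fragment V E v F" "\<forall>z\<in>S. fragment V E v (f z)"
  shows "fragment V E v (F \<inter> \<Inter>(f ` S))"
  using assms
proof (induction S rule: finite_induct)
  case empty then show ?case by simp
next
  case (insert x S)
  have h1: "fragment V E v (F \<inter> \<Inter>(f ` S))" using insert.IH insert.prems by simp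
  have h2: "fragment V E v (f x)" using insert.prems by simp
  have "fragment V E v ((F \<inter> \<Inter>(f ` S)) \<inter> f x)"
    using frag_closed[OF h1 h2] by (rule conjunct1)
  moreover have "(F \<inter> \<Inter>(f ` S)) \<inter> f x = F \<inter> \<Inter>(f ` insert x S)" by auto
  ultimately show ?case by simp
qed

theorem lemma4p1:
  fixes V :: "'a set" and E :: "('a \<times> 'a) set" and v :: 'a
  assumes "E \<subseteq> V \<times> V"
    and "reflexive_rel V E"
    and "locally_finite V E"
    and "v \<in> V"
  shows "(\<forall>F1 F2. fragment V E v F1 \<and> fragment V E v F2 \<longrightarrow>
            fragment V E v (F1 \<inter> F2) \<and> fragment V E v (F1 \<union> F2))
         \<and> (\<exists>F0. fragment V E v F0 \<and> (\<forall>F. fragment V E v F \<longrightarrow> F0 \<subseteq> F))"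
proof -
  have vv: "(v, v) \<in> E" using assms(2,4) unfolding reflexive_rel_def by blast
  have m1: "moser_set V E v {v}"
    using vv assms(4) unfolding moser_set_def in_nbhd_def by auto
  have f1: "finite (bdry E {v})"
    using assms(3,4) unfolding locally_finite_def bdry_def by auto
  have "\<exists>X. moser_set V E v X \<and> finite (bdry E X) \<and> card (bdry E X) = kappa V E v"
    unfolding kappa_def by (rule LeastI_ex) (use m1 f1 in blast)
  then obtain F1 where "moser_set V E v F1 \<and> finite (bdry E F1) \<and> card (bdry E F1) = kappa V E v" ..
  then have F1: "fragment V E v F1" unfolding fragment_def .
  define K where "K = \<Inter>{F. fragment V E v F}"
  have KF: "\<And>F. fragment V E v F \<Longrightarrow> K \<subseteq> F" unfolding K_def by (rule Inter_lower) simp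
  have vF: "\<And>F. fragment V E v F \<Longrightarrow> v \<in> F"
    unfolding fragment_def moser_set_def by auto
  have mK: "moser_set V E v K"
  proof -
    have "F1 \<subseteq> V" "in_nbhd E {v} \<inter> F1 = {v}" using F1 unfolding fragment_def moser_set_def by auto
    then have "K \<subseteq> V" using KF[OF F1] by blast
    moreover have "v \<in> K" using vF unfolding K_def by auto
    moreover have "in_nbhd E {v} \<inter> K \<subseteq> {v}"
      using KF[OF F1] \<open>in_nbhd E {v} \<inter> F1 = {v}\<close> by blast
    ultimately show ?thesis using vv unfolding moser_set_def in_nbhd_def by blast
  qed
  have bK: "finite (bdry E K) \<and> card (bdry E K) \<le> kappa V E v"
  proof (rule ccontr)
    assume nb: "\<not> ?thesis"
    obtain S where S: "S \<subseteq> bdry E K" "finite S" "card S = Suc (kappa V E v)"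
    proof (cases "finite (bdry E K)")
      case True
      with nb have "Suc (kappa V E v) \<le> card (bdry E K)" by simp
      then obtain T where "T \<subseteq> bdry E K" "card T = Suc (kappa V E v)" "finite T"
        by (rule obtain_subset_with_card_n)
      then show ?thesis using that by blast
    next
      case False
      then obtain T where "finite T" "card T = Suc (kappa V E v)" "T \<subseteq> bdry E K"
        using infinite_arbitrarily_large by blast
      then show ?thesis using that by blast
    qed
    have "\<forall>z\<in>S. \<exists>F. fragment V E v F \<and> z \<notin> F"
    proof
      fix z assume "z \<in> S"
      then have "z \<notin> K" using S(1) unfolding bdry_def by blast
      then show "\<exists>F. fragment V E v F \<and> z \<notin> F" unfolding K_def by auto
    qed
    then obtain f where f: "\<forall>z\<in>S. fragment V E v (f z) \<and> z \<notin> f z" by (rule bchoice[elim_format]) blast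
    define G where "G = F1 \<inter> \<Inter>(f ` S)"
    have G: "fragment V E v G" unfolding G_def
      using frag_fin_inter[OF S(2) F1, of f] f by simp
    have "S \<subseteq> bdry E G"
    proof
      fix z assume z: "z \<in> S"
      have "z \<notin> G" using f z unfolding G_def by blast
      moreover have "z \<in> out_nbhd E G"
        using z S(1) KF[OF G] unfolding bdry_def out_nbhd_def by blast
      ultimately show "z \<in> bdry E G" unfolding bdry_def by blast
    qed
    then have "card S \<le> card (bdry E G)"
      using G unfolding fragment_def by (metis card_mono)
    then show False using G S(3) unfolding fragment_def by simp
  qed
  have "fragment V E v K"
    using bK kappa_le[OF mK] mK unfolding fragment_def by simp
  then show ?thesis using frag_closed[of V E v] KF by (intro conjI allI impI exI[of _ K]) auto
qed

end
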